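(* Let $m,T$ be positive integers with $T\ge 2$, let $n=2^T-1$, let $\mathbf{G}\in\mathbb{F}_2^{n\times m}$ have $n$ distinct nonzero rows $\mathbf{g}_1,\dots,\mathbf{g}_n$ spanning a subspace of dimension $T$ (so the rows are exactly the nonzero vectors of that subspace), and let $\mathbf{A}\in\mathbb{F}_2^{T\times m}$ have rows forming a basis of the row space of $\mathbf{G}$. For $1\le k\le T$ let $T_k^{\min}$ denote the smallest $T_k$ for which there is $\mathbf{P}\in\mathbb{F}_2^{T_k\times T}$ such that every $\mathbf{g}_i$ is a sum over $\mathbb{F}_2$ of at most $k$ rows of $\mathbf{P}\mathbf{A}$. Then: (i) for every $k<T$, $T_k^{\min}\ge T+1$; in particular, if $\lceil T/2\rceil\le k<T$ then $T_k^{\min}=T+1$; (ii) if $1\le k<\lceil T/2\rceil$ then $$T_k^{\min}\ \ge\ \frac{k}{e}\left(\frac{2^T-1}{k}\right)^{1/k}=2^{\Omega\left(\frac{T}{k}+\frac{k-1}{k}\log k\right)}.$$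
   Context: Logarithms are base 2 and $e$ is Euler's number. *)

theory Defs
  imports "HOL-Analysis.Analysis" "HOL-Library.Z2"
begin

text \<open>A matrix P in F_2^{Tk x T} is given by its rows P 0, ..., P (Tk-1) :: bit^'t;
  row j of P A is (P j) v* A.\<close>

definition Tmin :: "nat \<Rightarrow> bit^'m^'n \<Rightarrow> bit^'m^'t \<Rightarrow> nat" where
  "Tmin k G A = (LEAST Tk. \<exists>P :: nat \<Rightarrow> bit^'t.
      \<forall>i. \<exists>S. S \<subseteq> {..<Tk} \<and> card S \<le> k \<and> G $ i = (\<Sum>j\<in>S. P j v* A))"

end

theory Submission imports Defs begin

lemma vm_sum: "finite S \<Longrightarrow> (\<Sum>j\<in>S. f j) v* A = (\<Sum>j\<in>S. f j v* A)"
  by (induction S rule: finite_induct) (auto simp: vector_matrix_left_distrib)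

lemma axis_vm: "axis i (1::'a::comm_semiring_1) v* A = A $ i"
proof -
  have "(\<Sum>ib\<in>UNIV. (if ib = i then 1 else 0) * A $ ib $ j) = A $ i $ j" for j
  proof -
    have "(\<Sum>ib\<in>UNIV. (if ib = i then 1 else 0) * A $ ib $ j) = (\<Sum>ib\<in>UNIV. if ib = i then A $ ib $ j else 0)"
      by (rule sum.cong) auto
    also have "\<dots> = A $ i $ j" by simp
    finally show ?thesis .
  qed
  thus ?thesis unfolding vector_matrix_mult_def axis_def by (simp add: vec_eq_iff)
qed

lemma span_rows_vm:
  fixes A :: "'a::field^'m^'t"
  assumes "y \<in> vec.span (rows A)" shows "\<exists>x. y = x v* A"
proof -
  have "vec.subspace (range (\<lambda>x. x v* A))"
    unfolding vec.subspace_def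
  proof (intro conjI ballI allI)
    show "0 \<in> range (\<lambda>x. x v* A)" by (metis rangeI vector_matrix_mult_0)
  next
    fix u v assume "u \<in> range (\<lambda>x. x v* A)" "v \<in> range (\<lambda>x. x v* A)"
    then obtain a b where "u = a v* A" "v = b v* A" by blast
    thus "u + v \<in> range (\<lambda>x. x v* A)" by (metis rangeI vector_matrix_left_distrib)
  next
    fix c u assume "u \<in> range (\<lambda>x. x v* A)"
    then obtain a where "u = a v* A" by blast
    thus "c *s u \<in> range (\<lambda>x. x v* A)" by (metis rangeI scalar_vector_matrix_assoc)
  qed
  moreover have "rows A \<subseteq> range (\<lambda>x. x v* A)"
  proof
    fix r assume "r \<in> rows A"
    then obtain i where "r = row i A" unfolding rows_def by blast
    hence "r = A $ i" by (simp add: row_def)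
    thus "r \<in> range (\<lambda>x. x v* A)" by (metis axis_vm rangeI)
  qed
  ultimately have "vec.span (rows A) \<subseteq> range (\<lambda>x. x v* A)"
    by (simp add: vec.span_minimal)
  thus ?thesis using assms by blast
qed

lemma card_small: "card {S. S \<subseteq> {..<N} \<and> card S \<le> k} = (\<Sum>i\<le>k. N choose i)"
proof -
  have "{S. S \<subseteq> {..<N} \<and> card S \<le> k} = (\<Union>i\<in>{..k}. {S. S \<subseteq> {..<N} \<and> card S = i})"
    by auto
  also have "card \<dots> = (\<Sum>i\<le>k. card {S. S \<subseteq> {..<N} \<and> card S = i})"
    by (rule card_UN_disjoint) (auto intro: finite_subset[of _ "Pow {..<N}"])
  also have "\<dots> = (\<Sum>i\<le>k. N choose i)"
    by (simp add: n_subsets)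
  finally show ?thesis .
qed

lemma binom_bound:
  assumes "1 \<le> k" "k \<le> N"
  shows "real (\<Sum>i\<le>k. N choose i) \<le> (exp 1 * N / k) ^ k"
proof -
  define q where "q = real k / real N"
  have q0: "0 < q" "q \<le> 1" using assms by (auto simp: q_def)
  have "real (\<Sum>i\<le>k. N choose i) * q ^ k = (\<Sum>i\<le>k. real (N choose i) * q ^ k)"
    by (simp add: sum_distrib_right)
  also have "\<dots> \<le> (\<Sum>i\<le>k. real (N choose i) * q ^ i)"
    by (rule sum_mono) (use q0 in \<open>auto intro!: mult_left_mono power_decreasing\<close>)
  also have "\<dots> \<le> (\<Sum>i\<le>N. real (N choose i) * q ^ i)"
    by (rule sum_mono2) (use assms q0 in auto)
  also have "\<dots> = (q + 1) ^ N"
    by (simp add: binomial_ring)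
  also have "\<dots> \<le> exp q ^ N"
    by (rule power_mono) (use q0 in \<open>auto simp: add.commute\<close>)
  also have "\<dots> = exp 1 ^ k"
    using assms by (simp add: q_def flip: exp_of_nat_mult)
  finally have "real (\<Sum>i\<le>k. N choose i) \<le> exp 1 ^ k / q ^ k"
    using q0 by (simp add: field_simps)
  also have "\<dots> = (exp 1 * N / k) ^ k"
    using assms by (simp add: q_def power_divide field_simps)
  finally show ?thesis .
qed

lemma count_subsets:
  fixes G :: "'b::comm_monoid_add^'m^'n" and w :: "nat \<Rightarrow> 'b^'m"
  assumes h: "\<forall>i. \<exists>S. S \<subseteq> {..<N} \<and> card S \<le> k \<and> G $ i = (\<Sum>j\<in>S. w j)"
    and inj: "inj (\<lambda>i. G $ i)" and nz: "\<forall>i. G $ i \<noteq> 0"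
  shows "CARD('n) \<le> card {S. S \<subseteq> {..<N} \<and> S \<noteq> {} \<and> card S \<le> k}"
proof -
  from h obtain f where f: "\<forall>i. f i \<subseteq> {..<N} \<and> card (f i) \<le> k \<and> G $ i = (\<Sum>j\<in>f i. w j)"
    by metis
  have "inj f"
  proof (rule injI)
    fix x y assume "f x = f y"
    hence "G $ x = G $ y" using f by metis
    thus "x = y" using inj by (simp add: inj_eq)
  qed
  moreover have "f ` UNIV \<subseteq> {S. S \<subseteq> {..<N} \<and> S \<noteq> {} \<and> card S \<le> k}"
  proof safe
    fix i assume "f i = {}"
    hence "G $ i = 0" using f by (metis sum.empty)
    thus False using nz by blast
  qed (use f in auto)
  moreover have "finite {S. S \<subseteq> {..<N} \<and> S \<noteq> {} \<and> card S \<le> k}"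
    by (rule finite_subset[of _ "Pow {..<N}"]) auto
  ultimately show ?thesis using card_inj_on_le by blast
qed

lemma lower_aux:
  fixes G :: "'b::comm_monoid_add^'m^'n" and w :: "nat \<Rightarrow> 'b^'m"
  assumes h: "\<forall>i. \<exists>S. S \<subseteq> {..<N} \<and> card S \<le> k \<and> G $ i = (\<Sum>j\<in>S. w j)"
    and inj: "inj (\<lambda>i. G $ i)" and nz: "\<forall>i. G $ i \<noteq> 0"
    and n: "CARD('n) = 2 ^ T - 1" and kT: "k < T" and NT: "N \<le> T"
  shows False
proof -
  have "CARD('n) \<le> card {S. S \<subseteq> {..<N} \<and> S \<noteq> {} \<and> card S \<le> k}"
    by (rule count_subsets[OF h inj nz])
  also have "\<dots> \<le> card (Pow {..<T} - {{}, {..<T}})"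
  proof (rule card_mono)
    show "{S. S \<subseteq> {..<N} \<and> S \<noteq> {} \<and> card S \<le> k} \<subseteq> Pow {..<T} - {{}, {..<T}}"
      using NT kT by auto
  qed auto
  also have "\<dots> = 2 ^ T - 2"
  proof -
    have "{..<T} \<noteq> {}" using kT by auto
    hence "card {{}, {..<T::nat}} = 2" by simp
    moreover have "{{}, {..<T}} \<subseteq> Pow {..<T}" by auto
    ultimately show ?thesis by (simp add: card_Diff_subset card_Pow)
  qed
  finally have "2 ^ T - 1 \<le> (2::nat) ^ T - 2" using n by simp
  moreover have "(2::nat) \<le> 2 ^ T" using power_increasing[of 1 T "2::nat"] kT by simp
  ultimately show False by linarith
qed

lemma exists_P:
  fixes A :: "bit^'m^'t" and G :: "bit^'m^'n"
  assumes rep: "\<forall>i. \<exists>x. G $ i = x v* A" and k: "1 \<le> k"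
  shows "\<exists>(N::nat) P. \<forall>i. \<exists>S. S \<subseteq> {..<N} \<and> card S \<le> k \<and> G $ i = (\<Sum>j\<in>S. (P j :: bit^'t) v* A)"
proof -
  obtain h where h: "bij_betw h {0..<CARD('n)} (UNIV :: 'n set)"
    using ex_bij_betw_nat_finite[of "UNIV :: 'n set", OF finite_class.finite_UNIV] by blast
  obtain x where x: "\<forall>i. G $ i = x i v* A" using choice[OF rep] by (elim exE) (rule that)
  define P :: "nat \<Rightarrow> bit^'t" where "P j = x (h j)" for j
  have "\<forall>i. \<exists>S. S \<subseteq> {..<CARD('n)} \<and> card S \<le> k \<and> G $ i = (\<Sum>j\<in>S. x (h j) v* A)"
  proof
    fix i
    define j where "j = inv_into {0..<CARD('n)} h i"
    have hs: "h ` {0..<CARD('n)} = UNIV" using h by (simp add: bij_betw_def)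
    have j1: "j \<in> {0..<CARD('n)}" unfolding j_def
      by (rule inv_into_into) (simp add: hs)
    have j2: "h j = i" unfolding j_def by (rule f_inv_into_f) (simp add: hs)
    show "\<exists>S. S \<subseteq> {..<CARD('n)} \<and> card S \<le> k \<and> G $ i = (\<Sum>j\<in>S. x (h j) v* A)"
    proof (rule exI[of _ "{j}"], intro conjI)
      show "{j} \<subseteq> {..<CARD('n)}" using j1 by auto
      show "card {j} \<le> k" using k by simp
      show "G $ i = (\<Sum>j\<in>{j}. x (h j) v* A)" using j2 x by simp
    qed
  qed
  then have hP: "\<forall>i. \<exists>S. S \<subseteq> {..<CARD('n)} \<and> card S \<le> k \<and> G $ i = (\<Sum>j\<in>S. P j v* A)"
    by (simp add: P_def)
  show ?thesis
    apply (rule exI[of _ "CARD('n)"])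
    apply (rule exI[of _ P])
    using [[show_types]] apply (rule hP)
    done
qed

lemma construct:
  fixes A :: "bit^'m^'t" and G :: "bit^'m^'n"
  assumes rep: "\<forall>i. \<exists>x. G $ i = x v* A" and k: "CARD('t) \<le> 2 * k"
  shows "\<exists>P. \<forall>i. \<exists>S. S \<subseteq> {..<CARD('t)+1} \<and> card S \<le> k \<and> G $ i = (\<Sum>j\<in>S. (P j :: bit^'t) v* A)"
proof -
  define T where "T = CARD('t)"
  obtain e where e: "bij_betw e {0..<T} (UNIV :: 't set)"
    using ex_bij_betw_nat_finite[of "UNIV :: 't set", OF finite_class.finite_UNIV] unfolding T_def by blast
  define P :: "nat \<Rightarrow> bit^'t" where "P j = (if j < T then axis (e j) 1 else (\<chi> t. 1))" for j
  have ex: "\<exists>j0<T. e j0 = t \<and> (\<forall>j<T. e j = t \<longleftrightarrow> j = j0)" for t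
  proof -
    obtain j0 where "j0 \<in> {0..<T}" "e j0 = t" using e by (metis UNIV_I bij_betw_iff_bijections)
    moreover have "\<forall>j<T. e j = t \<longleftrightarrow> j = j0"
      using e calculation unfolding bij_betw_def inj_on_def by auto
    ultimately show ?thesis by auto
  qed
  have "\<exists>S. S \<subseteq> {..<T+1} \<and> card S \<le> k \<and> G $ i = (\<Sum>j\<in>S. P j v* A)" for i
  proof -
    obtain x where x: "G $ i = x v* A" using rep by blast
    define S where "S = {j. j < T \<and> x $ e j = 1}"
    define C where "C = {j. j < T \<and> x $ e j = 0}"
    have fS: "finite S" "finite C" unfolding S_def C_def by auto
    have sumS: "(\<Sum>j\<in>S. P j) = x"
    proof (subst vec_eq_iff, intro allI)
      fix t
      obtain j0 where j0: "j0 < T" "e j0 = t" "\<forall>j<T. e j = t \<longleftrightarrow> j = j0" using ex by blast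
      have "(\<Sum>j\<in>S. P j) $ t = (\<Sum>j\<in>S. P j $ t)" by simp
      also have "\<dots> = (\<Sum>j\<in>S. if j = j0 then 1 else 0)"
        by (rule sum.cong) (use j0 in \<open>auto simp: S_def P_def axis_def\<close>)
      also have "\<dots> = x $ t" using fS j0 by (auto simp: S_def)
      finally show "(\<Sum>j\<in>S. P j) $ t = x $ t" .
    qed
    have sumC: "(\<Sum>j\<in>insert T C. P j) = x"
    proof (subst vec_eq_iff, intro allI)
      fix t
      obtain j0 where j0: "j0 < T" "e j0 = t" "\<forall>j<T. e j = t \<longleftrightarrow> j = j0" using ex by blast
      have "(\<Sum>j\<in>insert T C. P j) $ t = 1 + (\<Sum>j\<in>C. P j $ t)" using fS by (simp add: C_def P_def)
      also have "(\<Sum>j\<in>C. P j $ t) = (\<Sum>j\<in>C. if j = j0 then 1 else 0)"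
        by (rule sum.cong) (use j0 in \<open>auto simp: C_def P_def axis_def\<close>)
      also have "1 + \<dots> = x $ t" using fS j0 by (auto simp: C_def)
      finally show "(\<Sum>j\<in>insert T C. P j) $ t = x $ t" .
    qed
    have card: "card S + card C = T"
    proof -
      have "S \<union> C = {..<T}" "S \<inter> C = {}" unfolding S_def C_def by auto
      thus ?thesis using fS card_Un_disjoint by (metis card_lessThan)
    qed
    show ?thesis
    proof (cases "card S \<le> k")
      case True
      show ?thesis
        by (rule exI[of _ S]) (use True x sumS fS in \<open>auto simp: S_def vm_sum[symmetric]\<close>)
    next
      case False
      have "T \<notin> C" by (simp add: C_def)
      hence "card (insert T C) \<le> k" using False card k fS unfolding T_def by simp
      thus ?thesis
        by (intro exI[of _ "insert T C"]) (use x sumC fS in \<open>auto simp: C_def vm_sum[symmetric]\<close>)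
    qed
  qed
  thus ?thesis unfolding T_def by blast
qed

lemma final_real:
  fixes n N k :: real
  assumes k: "1 \<le> k" and N: "0 < N" and n: "1 \<le> n" and h: "n \<le> (exp 1 * N / k) ^ nat k'"
    and kk: "k = real (nat k')"
  shows "k / exp 1 * (n / k) powr (1 / k) \<le> N"
proof -
  define y where "y = exp 1 * N / k"
  have y: "0 < y" using k N by (simp add: y_def)
  have "(n / k) powr (1 / k) \<le> n powr (1 / k)"
    by (rule powr_mono2) (use k n in \<open>auto simp: divide_le_eq\<close>)
  also have "\<dots> \<le> (y ^ nat k') powr (1 / k)"
    by (rule powr_mono2) (use k n h in \<open>auto simp: y_def\<close>)
  also have "(y ^ nat k') = y powr k" using y kk by (simp add: powr_realpow)
  also have "(y powr k) powr (1 / k) = y" using k y by (simp add: powr_powr)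
  finally have "k / exp 1 * (n / k) powr (1 / k) \<le> k / exp 1 * y"
    using k by (intro mult_left_mono) auto
  also have "\<dots> = N" using k by (simp add: y_def)
  finally show ?thesis .
qed


theorem lemma1:
  fixes G :: "bit^'m^'n" and A :: "bit^'m^'t"
  assumes T2: "CARD('t) \<ge> 2"
    and n_def: "CARD('n) = 2 ^ CARD('t) - 1"
    and G_distinct: "inj (\<lambda>i. G $ i)"
    and G_nonzero: "\<forall>i. G $ i \<noteq> 0"
    and G_dim: "vec.dim (vec.span (rows G)) = CARD('t)"
    and A_inj: "inj (\<lambda>i. A $ i)"
    and A_indep: "vec.independent (rows A)"
    and A_span: "vec.span (rows A) = vec.span (rows G)"
  shows "(\<forall>k. 1 \<le> k \<and> k < CARD('t) \<longrightarrow> Tmin k G A \<ge> CARD('t) + 1)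
       \<and> (\<forall>k. nat \<lceil>real CARD('t) / 2\<rceil> \<le> k \<and> k < CARD('t) \<longrightarrow> Tmin k G A = CARD('t) + 1)
       \<and> (\<forall>k. 1 \<le> k \<and> k < nat \<lceil>real CARD('t) / 2\<rceil> \<longrightarrow>
            real (Tmin k G A) \<ge> real k / exp 1 * ((2 ^ CARD('t) - 1) / real k) powr (1 / real k))"
proof -
  define Q where "Q k N \<longleftrightarrow> (\<exists>P::nat \<Rightarrow> bit^'t. \<forall>i. \<exists>S. S \<subseteq> {..<N} \<and> card S \<le> k \<and> G $ i = (\<Sum>j\<in>S. P j v* A))" for k N
  have Tm: "Tmin k G A = (LEAST N. Q k N)" for k unfolding Tmin_def Q_def by simp
  have rep: "\<forall>i. \<exists>x. G $ i = x v* A"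
  proof
    fix i
    have "G $ i \<in> rows G" unfolding rows_def row_def by auto
    hence "G $ i \<in> vec.span (rows A)" using A_span vec.span_base by metis
    thus "\<exists>x. G $ i = x v* A" by (rule span_rows_vm)
  qed
  have QT: "Q k (Tmin k G A)" if "1 \<le> k" for k
  proof -
    have "\<exists>N. Q k N" using exists_P[OF rep that] unfolding Q_def by blast
    thus ?thesis unfolding Tm by (rule LeastI_ex)
  qed
  have low: "Tmin k G A \<ge> CARD('t) + 1" if k1: "1 \<le> k" and kT: "k < CARD('t)" for k
  proof (rule ccontr)
    assume "\<not> Tmin k G A \<ge> CARD('t) + 1"
    hence le: "Tmin k G A \<le> CARD('t)" by simp
    from QT[OF k1] obtain P :: "nat \<Rightarrow> bit^'t" where
      P: "\<forall>i. \<exists>S. S \<subseteq> {..<Tmin k G A} \<and> card S \<le> k \<and> G $ i = (\<Sum>j\<in>S. P j v* A)"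
      unfolding Q_def by blast
    show False by (rule lower_aux[OF P G_distinct G_nonzero n_def kT le])
  qed
  have part2: "Tmin k G A = CARD('t) + 1" if a: "nat \<lceil>real CARD('t) / 2\<rceil> \<le> k" and kT: "k < CARD('t)" for k
  proof -
    have "\<lceil>real CARD('t) / 2\<rceil> \<le> int k" using a by (simp add: nat_le_iff)
    hence "real CARD('t) / 2 \<le> real k" by (simp add: ceiling_le_iff)
    hence T2k: "CARD('t) \<le> 2 * k" by linarith
    hence k1: "1 \<le> k" using T2 by linarith
    have "Q k (CARD('t) + 1)" using construct[OF rep T2k] unfolding Q_def by blast
    hence "Tmin k G A \<le> CARD('t) + 1" unfolding Tm by (rule Least_le)
    thus ?thesis using low[OF k1 kT] by simp
  qed
  have part3: "real (Tmin k G A) \<ge> real k / exp 1 * ((2 ^ CARD('t) - 1) / real k) powr (1 / real k)"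
    if k1: "1 \<le> k" and a: "k < nat \<lceil>real CARD('t) / 2\<rceil>" for k
  proof -
    have "int k < \<lceil>real CARD('t) / 2\<rceil>" using a by linarith
    hence "real k < real CARD('t) / 2" by (simp add: less_ceiling_iff)
    hence kT: "k < CARD('t)" by linarith
    define N where "N = Tmin k G A"
    have NT: "N \<ge> CARD('t) + 1" using low[OF k1 kT] by (simp add: N_def)
    from QT[OF k1] obtain P :: "nat \<Rightarrow> bit^'t" where
      P: "\<forall>i. \<exists>S. S \<subseteq> {..<N} \<and> card S \<le> k \<and> G $ i = (\<Sum>j\<in>S. P j v* A)"
      unfolding Q_def N_def by blast
    have "CARD('n) \<le> card {S. S \<subseteq> {..<N} \<and> S \<noteq> {} \<and> card S \<le> k}"
      by (rule count_subsets[OF P G_distinct G_nonzero])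
    also have "\<dots> \<le> card {S. S \<subseteq> {..<N} \<and> card S \<le> k}"
      by (rule card_mono) (auto intro: finite_subset[of _ "Pow {..<N}"])
    also have "\<dots> = (\<Sum>i\<le>k. N choose i)" by (rule card_small)
    finally have "real CARD('n) \<le> real (\<Sum>i\<le>k. N choose i)" by linarith
    also have "\<dots> \<le> (exp 1 * N / k) ^ k" using k1 NT kT by (intro binom_bound) auto
    finally have b: "real CARD('n) \<le> (exp 1 * N / k) ^ nat (int k)" by simp
    have nreal: "real CARD('n) = 2 ^ CARD('t) - 1" using n_def by (simp add: of_nat_diff)
    have p2: "(2::real) \<le> 2 ^ CARD('t)" using power_increasing[of 1 "CARD('t)" "2::real"] T2 by simp
    have "real k / exp 1 * (real CARD('n) / real k) powr (1 / real k) \<le> real N"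
      by (rule final_real[OF _ _ _ b]) (use k1 NT T2 nreal p2 in auto)
    thus ?thesis using nreal by (simp add: N_def)
  qed
  show ?thesis using low part2 part3 by blast
qed

end
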